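(* Let $\mathcal{X},\mathcal{Y}$ be topological spaces with $\mathcal{X}$ connected and simply connected, let $\phi:\mathcal{X}\to\mathbb{R}^m$ be continuous and injective, let $\rho:\mathbb{R}^n\to\mathcal{Y}$ be a continuous surjection admitting a section (a continuous $s:\mathcal{Y}\to\mathbb{R}^n$ with $\rho\circ s=1_{\mathcal{Y}}$), and let $\mathcal{F}$ be dense in $C(\mathbb{R}^m,\mathbb{R}^n)$ for the topology of uniform convergence on compacts. Then $\{\rho\circ f\circ\phi: f\in\mathcal{F}\}$ is dense in $C(\mathcal{X},\mathcal{Y})$ equipped with the compact-open topology.
   Context: The compact-open topology on $C(\mathcal{X},\mathcal{Y})$ is generated by the sets $\{f: f(K)\subseteq O\}$ with $K\subseteq\mathcal{X}$ compact and $O\subseteq\mathcal{Y}$ open. *)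

theory Defs
  imports "HOL-Analysis.Analysis"
begin

text \<open>Simply connected topological space: the abstract-topology analogue of the
library notion simply_connected (all loops are homotopic as loops).  For a
nonempty space this is equivalent to: path connected with trivial fundamental group.\<close>
definition simply_connected_space :: "'a topology \<Rightarrow> bool" where
  "simply_connected_space X \<equiv>
     \<forall>p q. pathin X p \<and> p 1 = p 0 \<and> pathin X q \<and> q 1 = q 0
       \<longrightarrow> homotopic_with (\<lambda>r. r 1 = r 0) (subtopology euclideanreal {0..1}) X p q"

definition compact_open :: "'a topology \<Rightarrow> 'b topology \<Rightarrow> ('a \<Rightarrow> 'b) topology" where
  "compact_open X Y =
     subtopology
       (topology_generated_by {{f. f ` K \<subseteq> U} | K U. compactin X K \<and> openin Y U})
       {f. continuous_map X Y f}"

definition dense_ucc :: "(real^'m \<Rightarrow> real^'n) set \<Rightarrow> bool" where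
  "dense_ucc F \<equiv> F \<subseteq> {f. continuous_on UNIV f} \<and>
     (\<forall>g K e. continuous_on UNIV g \<and> compact K \<and> e > 0 \<longrightarrow>
        (\<exists>f\<in>F. \<forall>x\<in>K. dist (f x) (g x) < e))"

end

theory Submission
  imports Defs
begin

definition nbhd_ok :: "'a topology \<Rightarrow> 'b topology \<Rightarrow> ('a \<Rightarrow> 'b) \<Rightarrow> ('a \<Rightarrow> 'b) set \<Rightarrow> ('a set \<times> 'b set) set \<Rightarrow> bool" where
  "nbhd_ok X Y g W A \<longleftrightarrow> finite A \<and> (\<forall>K U. (K,U)\<in>A \<longrightarrow> compactin X K \<and> openin Y U \<and> g ` K \<subseteq> U)
            \<and> {f. \<forall>K U. (K,U)\<in>A \<longrightarrow> f ` K \<subseteq> U} \<subseteq> W"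

lemma nbhd_ok_Int:
  assumes "nbhd_ok X Y g a A1" "nbhd_ok X Y g b A2"
  shows "nbhd_ok X Y g (a \<inter> b) (A1 \<union> A2)"
proof -
  have "{f. \<forall>K U. (K,U)\<in>A1 \<union> A2 \<longrightarrow> f ` K \<subseteq> U} \<subseteq> {f. \<forall>K U. (K,U)\<in>A1 \<longrightarrow> f ` K \<subseteq> U}" by blast
  moreover have "{f. \<forall>K U. (K,U)\<in>A1 \<union> A2 \<longrightarrow> f ` K \<subseteq> U} \<subseteq> {f. \<forall>K U. (K,U)\<in>A2 \<longrightarrow> f ` K \<subseteq> U}" by blast
  moreover have "finite (A1 \<union> A2)" using assms unfolding nbhd_ok_def by simp
  moreover have "\<forall>K U. (K,U)\<in>A1 \<union> A2 \<longrightarrow> compactin X K \<and> openin Y U \<and> g ` K \<subseteq> U"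
    using assms unfolding nbhd_ok_def by auto
  moreover have "{f. \<forall>K U. (K,U)\<in>A1 \<longrightarrow> f ` K \<subseteq> U} \<inter> {f. \<forall>K U. (K,U)\<in>A2 \<longrightarrow> f ` K \<subseteq> U} \<subseteq> a \<inter> b"
    using assms unfolding nbhd_ok_def by auto
  ultimately show ?thesis unfolding nbhd_ok_def by (meson le_inf_iff order_trans)
qed

lemma gen_nbhd:
  assumes "generate_topology_on {{f. f ` K \<subseteq> U} | K U. compactin X K \<and> openin Y U} W"
  shows "g \<in> W \<Longrightarrow> \<exists>A. nbhd_ok X Y g W A"
  using assms
proof (induction W rule: generate_topology_on.induct)
  case Empty
  then show ?case by simp
next
  case (Int a b)
  from Int.prems have "g \<in> a" "g \<in> b" by simp_all
  then obtain A1 A2 where "nbhd_ok X Y g a A1" "nbhd_ok X Y g b A2"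
    using Int.IH by blast
  then show ?case using nbhd_ok_Int by blast
next
  case (UN K)
  then obtain k where k: "k \<in> K" "g \<in> k" by blast
  then obtain A where "nbhd_ok X Y g k A" using UN.IH by blast
  moreover have "k \<subseteq> \<Union>K" using k(1) by blast
  ultimately have "nbhd_ok X Y g (\<Union>K) A" unfolding nbhd_ok_def by (meson order_trans)
  then show ?case by blast
next
  case (Basis s)
  then obtain K U where s: "s = {f. f ` K \<subseteq> U}" "compactin X K" "openin Y U" by blast
  have "g ` K \<subseteq> U" using Basis.prems s(1) by blast
  then have "nbhd_ok X Y g s {(K,U)}" using s unfolding nbhd_ok_def by simp
  then show ?case by blast
qed

theorem mainTheorem4:
  fixes X :: "'a topology" and Y :: "'b topology"
    and \<phi> :: "'a \<Rightarrow> real^'m" and \<rho> :: "real^'n \<Rightarrow> 'b"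
    and F :: "(real^'m \<Rightarrow> real^'n) set"
  assumes "connected_space X" and "simply_connected_space X"
    and "continuous_map X euclidean \<phi>" and "inj_on \<phi> (topspace X)"
    and "continuous_map euclidean Y \<rho>" and "\<rho> ` UNIV = topspace Y"
    and "\<exists>s. continuous_map Y euclidean s \<and> (\<forall>y\<in>topspace Y. \<rho> (s y) = y)"
    and "dense_ucc F"
  shows "(compact_open X Y) closure_of {\<rho> \<circ> f \<circ> \<phi> | f. f \<in> F}
           = topspace (compact_open X Y)"
proof -
  define B where "B = {{f. f ` K \<subseteq> U} | K U. compactin X K \<and> openin Y U}"
  obtain s where s: "continuous_map Y euclidean s" "\<And>y. y\<in>topspace Y \<Longrightarrow> \<rho> (s y) = y"
    using assms(7) by blast
  have phic: "continuous_map X euclidean \<phi>" and phii: "inj_on \<phi> (topspace X)"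
    and rhoc: "continuous_map euclidean Y \<rho>" using assms by auto
  have HX: "Hausdorff_space X"
    using Hausdorff_space_injective_preimage[OF _ phic phii] by simp
  have approx: "\<exists>f\<in>F. \<forall>K U. (K,U)\<in>A \<longrightarrow> (\<rho> \<circ> f \<circ> \<phi>) ` K \<subseteq> U"
    if g: "continuous_map X Y g" and A: "finite A"
      "\<forall>K U. (K,U)\<in>A \<longrightarrow> compactin X K \<and> openin Y U \<and> g ` K \<subseteq> U" for g A
  proof -
    define KK where "KK = \<Union>(fst ` A)"
    have KKc: "compactin X KK" unfolding KK_def
      using A by (intro compactin_Union) auto
    have KKs: "KK \<subseteq> topspace X" using KKc compactin_subset_topspace by auto
    define \<psi> where "\<psi> = inv_into KK \<phi>"
    have injK: "inj_on \<phi> KK" using phii KKs inj_on_subset by blast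
    have psic: "continuous_map (subtopology euclidean (\<phi> ` KK)) (subtopology X KK) \<psi>"
    proof (rule continuous_inverse_map)
      show "compact_space (subtopology X KK)" by (rule compact_space_subtopology[OF KKc])
      show "Hausdorff_space (euclidean :: (real^'m) topology)" by simp
      show "continuous_map (subtopology X KK) euclidean \<phi>"
        by (rule continuous_map_from_subtopology[OF phic])
      show "\<psi> (\<phi> x) = x" if "x \<in> topspace (subtopology X KK)" for x
        using that injK unfolding \<psi>_def by (simp add: inv_into_f_f)
      show "\<phi> ` KK \<subseteq> \<phi> ` topspace (subtopology X KK)" using KKs by auto
    qed
    define h0 where "h0 = s \<circ> (g \<circ> \<psi>)"
    have g1: "continuous_map (subtopology X KK) Y g" by (rule continuous_map_from_subtopology[OF g])
    have g2: "continuous_map (subtopology euclidean (\<phi> ` KK)) Y (g \<circ> \<psi>)"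
      by (rule continuous_map_compose[OF psic g1])
    have "continuous_map (subtopology euclidean (\<phi> ` KK)) euclidean h0"
      unfolding h0_def by (rule continuous_map_compose[OF g2 s(1)])
    then have h0c: "continuous_on (\<phi> ` KK) h0" by simp
    have cK: "compact (\<phi> ` KK)"
      using image_compactin[OF KKc phic] by simp
    have "closed (\<phi> ` KK)" using cK by (rule compact_imp_closed)
    then have cl: "closedin (top_of_set UNIV) (\<phi> ` KK)" by simp
    obtain h where h: "continuous_on UNIV h" "\<And>y. y \<in> \<phi> ` KK \<Longrightarrow> h y = h0 y"
      using Tietze_unbounded[OF h0c cl] by blast
    have "\<exists>e>0. \<forall>x\<in>s ` g ` K. ball x e \<subseteq> {z. \<rho> z \<in> U}" if KU: "(K,U) \<in> A" for K U
    proof -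
      have Kc: "compactin X K" and Uo: "openin Y U" and gK: "g ` K \<subseteq> U" using A(2) KU by blast+
      have "compactin euclidean (s ` g ` K)"
        by (intro image_compactin[OF _ s(1)] image_compactin[OF Kc g])
      then have c: "compact (s ` g ` K)" by simp
      have "openin euclidean {z \<in> topspace euclidean. \<rho> z \<in> U}"
        by (rule openin_continuous_map_preimage[OF rhoc Uo])
      then have o: "open {z. \<rho> z \<in> U}" by simp
      have sub: "s ` g ` K \<subseteq> {z. \<rho> z \<in> U}"
      proof
        fix z assume "z \<in> s ` g ` K"
        then obtain x where x: "x \<in> K" "z = s (g x)" by auto
        have "x \<in> topspace X" using Kc x compactin_subset_topspace by auto
        then have "g x \<in> topspace Y" using continuous_map_image_subset_topspace[OF g] by blast
        then show "z \<in> {z. \<rho> z \<in> U}" using s(2) x gK by auto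
      qed
      obtain e where "e > 0" "(\<Union>x\<in>s ` g ` K. ball x e) \<subseteq> {z. \<rho> z \<in> U}"
        using compact_subset_open_imp_ball_epsilon_subset[OF c o sub] by blast
      then show ?thesis by blast
    qed
    then have ex: "\<forall>a\<in>A. \<exists>e. e > 0 \<and> (\<forall>x\<in>s ` g ` fst a. ball x e \<subseteq> {z. \<rho> z \<in> snd a})"
      by fastforce
    obtain E where E0: "\<forall>a\<in>A. E a > 0 \<and> (\<forall>x\<in>s ` g ` fst a. ball x (E a) \<subseteq> {z. \<rho> z \<in> snd a})"
      using bchoice[OF ex] by blast
    have E: "E (K,U) > 0 \<and> (\<forall>x\<in>s ` g ` K. ball x (E (K,U)) \<subseteq> {z. \<rho> z \<in> U})"
      if "(K,U) \<in> A" for K U using E0 that by fastforce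
    define e where "e = Min (insert 1 (E ` A))"
    have epos: "e > 0" unfolding e_def using A E by (auto simp: Min_gr_iff)
    have ele: "e \<le> E a" if "a \<in> A" for a unfolding e_def using A that by simp
    have D: "\<forall>g K e. continuous_on UNIV g \<and> compact K \<and> e > 0 \<longrightarrow>
        (\<exists>f\<in>F. \<forall>x\<in>K. dist (f x) (g x) < e)" using assms(8) unfolding dense_ucc_def by (rule conjunct2)
    obtain f where f: "f \<in> F" "\<forall>y\<in>\<phi> ` KK. dist (f y) (h y) < e"
      using D[rule_format, OF conjI[OF h(1) conjI[OF cK epos]]] by blast
    have "\<forall>K U. (K,U)\<in>A \<longrightarrow> (\<rho> \<circ> f \<circ> \<phi>) ` K \<subseteq> U"
    proof (intro allI impI image_subsetI)
      fix K U x assume KU: "(K,U) \<in> A" and x: "x \<in> K"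
      have xKK: "x \<in> KK" unfolding KK_def using KU x by force
      have "h (\<phi> x) = s (g x)"
        using h(2)[of "\<phi> x"] xKK injK unfolding h0_def \<psi>_def by (simp add: inv_into_f_f)
      moreover have "dist (f (\<phi> x)) (h (\<phi> x)) < e" using f(2) xKK by blast
      ultimately have "dist (s (g x)) (f (\<phi> x)) < E (K,U)"
        using ele[OF KU] by (simp add: dist_commute)
      then have "f (\<phi> x) \<in> ball (s (g x)) (E (K,U))" by simp
      moreover have "ball (s (g x)) (E (K,U)) \<subseteq> {z. \<rho> z \<in> U}" using E[OF KU] x by blast
      ultimately have "f (\<phi> x) \<in> {z. \<rho> z \<in> U}" by (rule rev_subsetD)
      then show "(\<rho> \<circ> f \<circ> \<phi>) x \<in> U" by simp
    qed
    then show ?thesis using f(1) by blast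
  qed
  have top: "topspace (compact_open X Y) = {f. continuous_map X Y f}"
  proof -
    have "UNIV \<in> B" unfolding B_def
      by (rule CollectI, rule exI[of _ "{}"], rule exI[of _ "topspace Y"]) auto
    then have "topspace (topology_generated_by B) = UNIV" by auto
    then show ?thesis unfolding compact_open_def B_def[symmetric] by simp
  qed
  show ?thesis
  proof
    show "compact_open X Y closure_of {\<rho> \<circ> f \<circ> \<phi> |f. f \<in> F} \<subseteq> topspace (compact_open X Y)"
      by (rule closure_of_subset_topspace)
    show "topspace (compact_open X Y) \<subseteq> compact_open X Y closure_of {\<rho> \<circ> f \<circ> \<phi> |f. f \<in> F}"
    proof
      fix g assume gt: "g \<in> topspace (compact_open X Y)"
      then have g: "continuous_map X Y g" using top by auto
      show "g \<in> compact_open X Y closure_of {\<rho> \<circ> f \<circ> \<phi> |f. f \<in> F}"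
        unfolding in_closure_of
      proof (intro conjI gt allI impI)
        fix T assume T: "g \<in> T \<and> openin (compact_open X Y) T"
        then obtain W where W: "openin (topology_generated_by B) W" "T = W \<inter> {f. continuous_map X Y f}"
          unfolding compact_open_def B_def[symmetric] openin_subtopology by blast
        have "generate_topology_on B W" using W(1) openin_topology_generated_by by blast
        have "g \<in> W" using T W(2) by blast
        then obtain A0 where "nbhd_ok X Y g W A0"
          using gen_nbhd[of X Y W g] \<open>generate_topology_on B W\<close> unfolding B_def by blast
        then have A: "finite A0" "\<forall>K U. (K,U)\<in>A0 \<longrightarrow> compactin X K \<and> openin Y U \<and> g ` K \<subseteq> U"
            "{f. \<forall>K U. (K,U)\<in>A0 \<longrightarrow> f ` K \<subseteq> U} \<subseteq> W" unfolding nbhd_ok_def by blast+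
        obtain f where f: "f \<in> F" "\<forall>K U. (K,U)\<in>A0 \<longrightarrow> (\<rho> \<circ> f \<circ> \<phi>) ` K \<subseteq> U"
          using approx[OF g A(1) A(2)] by blast
        have fc: "continuous_on UNIV f" using assms(8) f(1) unfolding dense_ucc_def by auto
        have "continuous_map X Y (\<rho> \<circ> f \<circ> \<phi>)"
          by (intro continuous_map_compose[OF _ rhoc] continuous_map_compose[OF phic]) (use fc in simp)
        then have "\<rho> \<circ> f \<circ> \<phi> \<in> T" using A(3) f(2) W(2) by blast
        then show "\<exists>y. y \<in> {\<rho> \<circ> f \<circ> \<phi> |f. f \<in> F} \<and> y \<in> T" using f(1) by blast
      qed
    qed
  qed
qed

end
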